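(* Let $K$ be a field, $R$ an $\mathbb N$-graded $K$-algebra, and let $A=\sigma(R)\langle x_1,x_2\rangle$ be a connected graded quasi-commutative skew PBW extension of $R$. Then $A$ is a connected graded trimmed right double Ore extension of $R$.
   Context: All algebras are over a field $K$; a graded algebra $B$ is connected if $B_0=K$. A ring $A$ is a skew PBW extension of $R$ in $x_1,\dots,x_n$, written $\sigma(R)\langle x_1,\dots,x_n\rangle$, if $R\subseteq A$; $A$ is a free left $R$-module with basis the monomials $x_1^{\alpha_1}\cdots x_n^{\alpha_n}$; for each $i$ and $r\in R\setminus\{0\}$ there is $c_{i,r}\in R\setminus\{0\}$ with $x_ir-c_{i,r}x_i\in R$; and for all $i,j$ there is $c_{i,j}\in R\setminus\{0\}$ with $x_jx_i-c_{i,j}x_ix_j\in R+Rx_1+\cdots+Rx_n$. Then $x_ir=\sigma_i(r)x_i+\delta_i(r)$ with $\sigma_i$ an injective endomorphism and $\delta_i$ a $\sigma_i$-derivation. It is quasi-commutative if in fact $x_ir=c_{i,r}x_i$ and $x_jx_i=c_{i,j}x_ix_j$ (with $c_{i,r},c_{i,j}\in R\setminus\{0\}$). It is bijective if all $\sigma_i$ are bijective and all $c_{i,j}$ invertible. It is graded if it is bijective, $R$ is $\mathbb N$-graded, each $\sigma_i$ is graded, $\delta_i(R_m)\subseteq R_{m+1}$, and $x_jx_i-c_{i,j}x_ix_j\in R_2+R_1x_1+\cdots+R_1x_n$ with $c_{i,j}\in R_0$; the grading is $A_p=\mathrm{span}\{r_tx^\alpha: r_t\in R_t,\ t+|\alpha|=p\}$.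 A $K$-algebra $B\supseteq R$ is a right double Ore extension of $R$ if it is generated by $R$ and $x_1,x_2$; $x_2x_1=p_{12}x_1x_2+p_{11}x_1^2+\tau_1x_1+\tau_2x_2+\tau_0$ with $p_{12},p_{11}\in K$, $\tau_i\in R$; $B$ is a free left $R$-module with basis $\{x_1^ax_2^b\}$; and $x_1R+x_2R\subseteq Rx_1+Rx_2+R$. Writing $x_ir=\sigma_{i1}(r)x_1+\sigma_{i2}(r)x_2+\delta_i(r)$, it is trimmed if $\delta_1=\delta_2=0$ and $\tau_0=\tau_1=\tau_2=0$. It is graded if all relations are homogeneous with $\deg x_1=\deg x_2=1$. *)

theory Defs
  imports "HOL-Algebra.Algebra"
begin

text \<open>All objects live inside one ambient (not necessarily commutative)
ring A (a HOL-Algebra ring). The base field K is a subfield of A contained in the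
centre of A (this is what a K-algebra structure on the nonzero ring A amounts to),
and R is a subring of A containing K, i.e. a K-subalgebra.\<close>

definition K_algebra_ext :: "('a,'b) ring_scheme \<Rightarrow> 'a set \<Rightarrow> 'a set \<Rightarrow> bool" where
  "K_algebra_ext A K R \<longleftrightarrow> ring A \<and> subfield K A
     \<and> (\<forall>k\<in>K. \<forall>a\<in>carrier A. k \<otimes>\<^bsub>A\<^esub> a = a \<otimes>\<^bsub>A\<^esub> k)
     \<and> subring R A \<and> K \<subseteq> R"

definition Kspan :: "('a,'b) ring_scheme \<Rightarrow> 'a set \<Rightarrow> 'a set \<Rightarrow> 'a set" where
  "Kspan A K S = {finsum A (\<lambda>i. c i \<otimes>\<^bsub>A\<^esub> v i) I | (I :: nat set) c v.
                    finite I \<and> c \<in> I \<rightarrow> K \<and> v \<in> I \<rightarrow> S}"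

definition graded_alg :: "('a,'b) ring_scheme \<Rightarrow> 'a set \<Rightarrow> 'a set \<Rightarrow> (nat \<Rightarrow> 'a set) \<Rightarrow> bool" where
  "graded_alg A K R Rg \<longleftrightarrow>
     (\<forall>n. Rg n \<subseteq> R \<and> \<zero>\<^bsub>A\<^esub> \<in> Rg n
          \<and> (\<forall>a\<in>Rg n. \<forall>b\<in>Rg n. a \<oplus>\<^bsub>A\<^esub> b \<in> Rg n)
          \<and> (\<forall>k\<in>K. \<forall>a\<in>Rg n. k \<otimes>\<^bsub>A\<^esub> a \<in> Rg n))
   \<and> (\<forall>m n. \<forall>a\<in>Rg m. \<forall>b\<in>Rg n. a \<otimes>\<^bsub>A\<^esub> b \<in> Rg (m + n))
   \<and> (\<forall>r\<in>R. \<exists>!c. (\<forall>n. c n \<in> Rg n) \<and> finite {n. c n \<noteq> \<zero>\<^bsub>A\<^esub>}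
                 \<and> r = finsum A c {n. c n \<noteq> \<zero>\<^bsub>A\<^esub>})"

definition mono2 :: "('a,'b) ring_scheme \<Rightarrow> 'a \<Rightarrow> 'a \<Rightarrow> nat \<times> nat \<Rightarrow> 'a" where
  "mono2 A x1 x2 p = (x1 [^]\<^bsub>A\<^esub> fst p) \<otimes>\<^bsub>A\<^esub> (x2 [^]\<^bsub>A\<^esub> snd p)"

definition left_free_mono_basis :: "('a,'b) ring_scheme \<Rightarrow> 'a set \<Rightarrow> 'a \<Rightarrow> 'a \<Rightarrow> bool" where
  "left_free_mono_basis A R x1 x2 \<longleftrightarrow>
     (\<forall>z\<in>carrier A. \<exists>!c. c \<in> UNIV \<rightarrow> R \<and> finite {p. c p \<noteq> \<zero>\<^bsub>A\<^esub>}
          \<and> z = finsum A (\<lambda>p. c p \<otimes>\<^bsub>A\<^esub> mono2 A x1 x2 p) {p. c p \<noteq> \<zero>\<^bsub>A\<^esub>})"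

definition lmul :: "('a,'b) ring_scheme \<Rightarrow> 'a set \<Rightarrow> 'a \<Rightarrow> 'a set" where
  "lmul A S y = {s \<otimes>\<^bsub>A\<^esub> y | s. s \<in> S}"

definition sum3 :: "('a,'b) ring_scheme \<Rightarrow> 'a set \<Rightarrow> 'a set \<Rightarrow> 'a set \<Rightarrow> 'a set" where
  "sum3 A S T U = {a \<oplus>\<^bsub>A\<^esub> b \<oplus>\<^bsub>A\<^esub> c | a b c. a \<in> S \<and> b \<in> T \<and> c \<in> U}"

definition skew_PBW2 :: "('a,'b) ring_scheme \<Rightarrow> 'a set \<Rightarrow> 'a \<Rightarrow> 'a \<Rightarrow> bool" where
  "skew_PBW2 A R x1 x2 \<longleftrightarrow>
     subring R A \<and> x1 \<in> carrier A \<and> x2 \<in> carrier A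
   \<and> left_free_mono_basis A R x1 x2
   \<and> (\<forall>xi\<in>{x1, x2}. \<forall>r\<in>R - {\<zero>\<^bsub>A\<^esub>}. \<exists>c\<in>R - {\<zero>\<^bsub>A\<^esub>}.
          xi \<otimes>\<^bsub>A\<^esub> r \<ominus>\<^bsub>A\<^esub> c \<otimes>\<^bsub>A\<^esub> xi \<in> R)
   \<and> (\<forall>xi\<in>{x1, x2}. \<forall>xj\<in>{x1, x2}. \<exists>c\<in>R - {\<zero>\<^bsub>A\<^esub>}.
          xj \<otimes>\<^bsub>A\<^esub> xi \<ominus>\<^bsub>A\<^esub> c \<otimes>\<^bsub>A\<^esub> xi \<otimes>\<^bsub>A\<^esub> xj
            \<in> sum3 A R (lmul A R x1) (lmul A R x2))"

definition pbw_sigma :: "('a,'b) ring_scheme \<Rightarrow> 'a set \<Rightarrow> 'a \<Rightarrow> 'a \<Rightarrow> 'a" where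
  "pbw_sigma A R xi r = (THE s. s \<in> R \<and> xi \<otimes>\<^bsub>A\<^esub> r \<ominus>\<^bsub>A\<^esub> s \<otimes>\<^bsub>A\<^esub> xi \<in> R)"

definition pbw_delta :: "('a,'b) ring_scheme \<Rightarrow> 'a set \<Rightarrow> 'a \<Rightarrow> 'a \<Rightarrow> 'a" where
  "pbw_delta A R xi r = xi \<otimes>\<^bsub>A\<^esub> r \<ominus>\<^bsub>A\<^esub> pbw_sigma A R xi r \<otimes>\<^bsub>A\<^esub> xi"

definition quasi_commutative_PBW2 :: "('a,'b) ring_scheme \<Rightarrow> 'a set \<Rightarrow> 'a \<Rightarrow> 'a \<Rightarrow> bool" where
  "quasi_commutative_PBW2 A R x1 x2 \<longleftrightarrow> skew_PBW2 A R x1 x2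
   \<and> (\<forall>xi\<in>{x1, x2}. \<forall>r\<in>R - {\<zero>\<^bsub>A\<^esub>}. \<exists>c\<in>R - {\<zero>\<^bsub>A\<^esub>}.
          xi \<otimes>\<^bsub>A\<^esub> r = c \<otimes>\<^bsub>A\<^esub> xi)
   \<and> (\<forall>xi\<in>{x1, x2}. \<forall>xj\<in>{x1, x2}. \<exists>c\<in>R - {\<zero>\<^bsub>A\<^esub>}.
          xj \<otimes>\<^bsub>A\<^esub> xi = c \<otimes>\<^bsub>A\<^esub> xi \<otimes>\<^bsub>A\<^esub> xj)"

text \<open>Graded skew PBW extension (this includes bijectivity: sigma_i bijective
on R and the constants c_{i,j} invertible; they are moreover required to lie in R_0
and the relations to lie in R_2 + R_1 x1 + R_1 x2).\<close>
definition graded_skew_PBW2 ::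
  "('a,'b) ring_scheme \<Rightarrow> 'a set \<Rightarrow> 'a set \<Rightarrow> (nat \<Rightarrow> 'a set) \<Rightarrow> 'a \<Rightarrow> 'a \<Rightarrow> bool" where
  "graded_skew_PBW2 A K R Rg x1 x2 \<longleftrightarrow> skew_PBW2 A R x1 x2
   \<and> graded_alg A K R Rg
   \<and> (\<forall>xi\<in>{x1, x2}. bij_betw (pbw_sigma A R xi) R R)
   \<and> (\<forall>xi\<in>{x1, x2}. \<forall>m. \<forall>r\<in>Rg m. pbw_sigma A R xi r \<in> Rg m
                               \<and> pbw_delta A R xi r \<in> Rg (m + 1))
   \<and> (\<forall>xi\<in>{x1, x2}. \<forall>xj\<in>{x1, x2}. \<exists>c\<in>Rg 0 - {\<zero>\<^bsub>A\<^esub>}.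
          c \<in> Units (A\<lparr>carrier := R\<rparr>)
        \<and> xj \<otimes>\<^bsub>A\<^esub> xi \<ominus>\<^bsub>A\<^esub> c \<otimes>\<^bsub>A\<^esub> xi \<otimes>\<^bsub>A\<^esub> xj
            \<in> sum3 A (Rg 2) (lmul A (Rg 1) x1) (lmul A (Rg 1) x2))"

definition ext_grading :: "('a,'b) ring_scheme \<Rightarrow> 'a set \<Rightarrow> (nat \<Rightarrow> 'a set) \<Rightarrow> 'a \<Rightarrow> 'a \<Rightarrow> nat \<Rightarrow> 'a set" where
  "ext_grading A K Rg x1 x2 p =
     Kspan A K {r \<otimes>\<^bsub>A\<^esub> mono2 A x1 x2 (a, b) | r t a b. r \<in> Rg t \<and> t + a + b = p}"

definition connected_ext :: "('a,'b) ring_scheme \<Rightarrow> 'a set \<Rightarrow> (nat \<Rightarrow> 'a set) \<Rightarrow> 'a \<Rightarrow> 'a \<Rightarrow> bool" where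
  "connected_ext A K Rg x1 x2 \<longleftrightarrow> ext_grading A K Rg x1 x2 0 = K"

definition right_double_ore ::
  "('a,'b) ring_scheme \<Rightarrow> 'a set \<Rightarrow> 'a set \<Rightarrow> 'a \<Rightarrow> 'a \<Rightarrow> 'a \<Rightarrow> 'a \<Rightarrow> 'a \<Rightarrow> 'a \<Rightarrow> 'a \<Rightarrow> bool" where
  "right_double_ore A K R x1 x2 p12 p11 t0 t1 t2 \<longleftrightarrow>
     subring R A \<and> x1 \<in> carrier A \<and> x2 \<in> carrier A
   \<and> carrier A = generate_ring A (R \<union> {x1, x2})
   \<and> p12 \<in> K \<and> p11 \<in> K \<and> t0 \<in> R \<and> t1 \<in> R \<and> t2 \<in> R
   \<and> x2 \<otimes>\<^bsub>A\<^esub> x1 = p12 \<otimes>\<^bsub>A\<^esub> x1 \<otimes>\<^bsub>A\<^esub> x2 \<oplus>\<^bsub>A\<^esub> p11 \<otimes>\<^bsub>A\<^esub> x1 \<otimes>\<^bsub>A\<^esub> x1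
        \<oplus>\<^bsub>A\<^esub> t1 \<otimes>\<^bsub>A\<^esub> x1 \<oplus>\<^bsub>A\<^esub> t2 \<otimes>\<^bsub>A\<^esub> x2 \<oplus>\<^bsub>A\<^esub> t0
   \<and> left_free_mono_basis A R x1 x2
   \<and> (\<forall>r\<in>R. \<forall>s\<in>R. x1 \<otimes>\<^bsub>A\<^esub> r \<oplus>\<^bsub>A\<^esub> x2 \<otimes>\<^bsub>A\<^esub> s
                      \<in> sum3 A (lmul A R x1) (lmul A R x2) R)"

definition doe_sigma1 :: "('a,'b) ring_scheme \<Rightarrow> 'a set \<Rightarrow> 'a \<Rightarrow> 'a \<Rightarrow> 'a \<Rightarrow> 'a \<Rightarrow> 'a" where
  "doe_sigma1 A R x1 x2 xi r = (THE s. s \<in> R \<and> (\<exists>t\<in>R. \<exists>d\<in>R.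
      xi \<otimes>\<^bsub>A\<^esub> r = s \<otimes>\<^bsub>A\<^esub> x1 \<oplus>\<^bsub>A\<^esub> t \<otimes>\<^bsub>A\<^esub> x2 \<oplus>\<^bsub>A\<^esub> d))"

definition doe_sigma2 :: "('a,'b) ring_scheme \<Rightarrow> 'a set \<Rightarrow> 'a \<Rightarrow> 'a \<Rightarrow> 'a \<Rightarrow> 'a \<Rightarrow> 'a" where
  "doe_sigma2 A R x1 x2 xi r = (THE t. t \<in> R \<and> (\<exists>s\<in>R. \<exists>d\<in>R.
      xi \<otimes>\<^bsub>A\<^esub> r = s \<otimes>\<^bsub>A\<^esub> x1 \<oplus>\<^bsub>A\<^esub> t \<otimes>\<^bsub>A\<^esub> x2 \<oplus>\<^bsub>A\<^esub> d))"

definition doe_delta :: "('a,'b) ring_scheme \<Rightarrow> 'a set \<Rightarrow> 'a \<Rightarrow> 'a \<Rightarrow> 'a \<Rightarrow> 'a \<Rightarrow> 'a" where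
  "doe_delta A R x1 x2 xi r = (THE d. d \<in> R \<and> (\<exists>s\<in>R. \<exists>t\<in>R.
      xi \<otimes>\<^bsub>A\<^esub> r = s \<otimes>\<^bsub>A\<^esub> x1 \<oplus>\<^bsub>A\<^esub> t \<otimes>\<^bsub>A\<^esub> x2 \<oplus>\<^bsub>A\<^esub> d))"

definition trimmed_doe ::
  "('a,'b) ring_scheme \<Rightarrow> 'a set \<Rightarrow> 'a \<Rightarrow> 'a \<Rightarrow> 'a \<Rightarrow> 'a \<Rightarrow> 'a \<Rightarrow> bool" where
  "trimmed_doe A R x1 x2 t0 t1 t2 \<longleftrightarrow>
     (\<forall>xi\<in>{x1, x2}. \<forall>r\<in>R. doe_delta A R x1 x2 xi r = \<zero>\<^bsub>A\<^esub>)
   \<and> t0 = \<zero>\<^bsub>A\<^esub> \<and> t1 = \<zero>\<^bsub>A\<^esub> \<and> t2 = \<zero>\<^bsub>A\<^esub>"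

text \<open>Graded: all relations homogeneous, deg x1 = deg x2 = 1, R graded by Rg.\<close>
definition graded_doe ::
  "('a,'b) ring_scheme \<Rightarrow> 'a set \<Rightarrow> 'a set \<Rightarrow> (nat \<Rightarrow> 'a set) \<Rightarrow> 'a \<Rightarrow> 'a \<Rightarrow> 'a \<Rightarrow> 'a \<Rightarrow> 'a \<Rightarrow> bool" where
  "graded_doe A K R Rg x1 x2 t0 t1 t2 \<longleftrightarrow>
     graded_alg A K R Rg
   \<and> (\<forall>xi\<in>{x1, x2}. \<forall>m. \<forall>r\<in>Rg m.
          doe_sigma1 A R x1 x2 xi r \<in> Rg m \<and> doe_sigma2 A R x1 x2 xi r \<in> Rg m
        \<and> doe_delta A R x1 x2 xi r \<in> Rg (m + 1))
   \<and> t0 \<in> Rg 2 \<and> t1 \<in> Rg 1 \<and> t2 \<in> Rg 1"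

end

theory Submission
  imports Defs
begin


lemma (in ring) mono2_simps:
  assumes "x1 \<in> carrier R" "x2 \<in> carrier R"
  shows "mono2 R x1 x2 (0,0) = \<one>" "mono2 R x1 x2 (1,0) = x1"
        "mono2 R x1 x2 (0,1) = x2" "mono2 R x1 x2 (1,1) = x1 \<otimes> x2"
  using assms by (simp_all add: mono2_def)

lemma (in ring) uniq_repr:
  assumes lf: "left_free_mono_basis R S x1 x2" and S: "S \<subseteq> carrier R"
    and x: "x1 \<in> carrier R" "x2 \<in> carrier R"
    and f: "f \<in> UNIV \<rightarrow> S" and g: "g \<in> UNIV \<rightarrow> S" and P: "finite P"
    and f0: "\<And>p. p \<notin> P \<Longrightarrow> f p = \<zero>" and g0: "\<And>p. p \<notin> P \<Longrightarrow> g p = \<zero>"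
    and eq: "finsum R (\<lambda>p. f p \<otimes> mono2 R x1 x2 p) P = finsum R (\<lambda>p. g p \<otimes> mono2 R x1 x2 p) P"
  shows "f = g"
proof -
  have mc: "\<And>p. mono2 R x1 x2 p \<in> carrier R" using x by (simp add: mono2_def)
  have fs: "finsum R (\<lambda>p. h p \<otimes> mono2 R x1 x2 p) P = finsum R (\<lambda>p. h p \<otimes> mono2 R x1 x2 p) {p. h p \<noteq> \<zero>}"
    if h: "h \<in> UNIV \<rightarrow> S" and h0: "\<And>p. p \<notin> P \<Longrightarrow> h p = \<zero>" for h
  proof -
    have hc: "\<And>p. h p \<in> carrier R" using h S by auto
    show ?thesis
      apply (rule add.finprod_mono_neutral_cong_right)
      using P h0 hc mc by auto
  qed
  have finf: "finite {p. f p \<noteq> \<zero>}" by (rule finite_subset[OF _ P]) (use f0 in auto)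
  have fing: "finite {p. g p \<noteq> \<zero>}" by (rule finite_subset[OF _ P]) (use g0 in auto)
  define z where "z = finsum R (\<lambda>p. f p \<otimes> mono2 R x1 x2 p) P"
  have fc: "\<And>p. f p \<in> carrier R" using f S by (metis Pi_iff UNIV_I subsetD)
  have zc: "z \<in> carrier R" unfolding z_def using fc mc by (auto intro!: finsum_closed)
  have ex: "\<exists>!c. c \<in> UNIV \<rightarrow> S \<and> finite {p. c p \<noteq> \<zero>} \<and> z = finsum R (\<lambda>p. c p \<otimes> mono2 R x1 x2 p) {p. c p \<noteq> \<zero>}"
    using lf zc unfolding left_free_mono_basis_def by blast
  have pf: "f \<in> UNIV \<rightarrow> S \<and> finite {p. f p \<noteq> \<zero>} \<and> z = finsum R (\<lambda>p. f p \<otimes> mono2 R x1 x2 p) {p. f p \<noteq> \<zero>}"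
    using f finf fs[OF f f0] unfolding z_def by blast
  have pg: "g \<in> UNIV \<rightarrow> S \<and> finite {p. g p \<noteq> \<zero>} \<and> z = finsum R (\<lambda>p. g p \<otimes> mono2 R x1 x2 p) {p. g p \<noteq> \<zero>}"
    using g fing fs[OF g g0] eq unfolding z_def by simp
  show ?thesis using ex pf pg by (metis (no_types, lifting))
qed

lemma (in ring) uniq4:
  assumes lf: "left_free_mono_basis R S x1 x2" and S: "S \<subseteq> carrier R" "\<zero> \<in> S"
    and x: "x1 \<in> carrier R" "x2 \<in> carrier R"
    and in_S: "a \<in> S" "b \<in> S" "c \<in> S" "d \<in> S" "a' \<in> S" "b' \<in> S" "c' \<in> S" "d' \<in> S"
    and eq: "a \<oplus> b \<otimes> x1 \<oplus> c \<otimes> x2 \<oplus> d \<otimes> (x1 \<otimes> x2) = a' \<oplus> b' \<otimes> x1 \<oplus> c' \<otimes> x2 \<oplus> d' \<otimes> (x1 \<otimes> x2)"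
  shows "a = a' \<and> b = b' \<and> c = c' \<and> d = d'"
proof -
  let ?P = "{(0,0),(1,0),(0,1),(1,1)} :: (nat \<times> nat) set"
  define F where "F = (\<lambda>a b c d (p::nat\<times>nat). if p = (0,0) then a else if p = (1,0) then b
     else if p = (0,1) then c else if p = (1,1) then d else \<zero>)"
  have sum: "finsum R (\<lambda>p. F a b c d p \<otimes> mono2 R x1 x2 p) ?P = a \<oplus> b \<otimes> x1 \<oplus> c \<otimes> x2 \<oplus> d \<otimes> (x1 \<otimes> x2)"
    if "a \<in> carrier R" "b \<in> carrier R" "c \<in> carrier R" "d \<in> carrier R" for a b c d
  proof -
    have mc: "\<And>p. mono2 R x1 x2 p \<in> carrier R" using x by (simp add: mono2_def)
    have fc: "\<And>p. F a b c d p \<otimes> mono2 R x1 x2 p \<in> carrier R" using that mc by (simp add: F_def)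
    have fc': "\<And>A. (\<lambda>p. F a b c d p \<otimes> mono2 R x1 x2 p) \<in> A \<rightarrow> carrier R" using fc by auto
    have "finsum R (\<lambda>p. F a b c d p \<otimes> mono2 R x1 x2 p) ?P = F a b c d (0,0) \<otimes> mono2 R x1 x2 (0,0) \<oplus>
       (F a b c d (1,0) \<otimes> mono2 R x1 x2 (1,0) \<oplus> (F a b c d (0,1) \<otimes> mono2 R x1 x2 (0,1) \<oplus>
       (F a b c d (1,1) \<otimes> mono2 R x1 x2 (1,1) \<oplus> \<zero>)))"
      apply (subst finsum_insert, simp, simp, rule fc', rule fc)+
      apply (simp only: finsum_empty)
      done
    then show ?thesis
      using that x by (simp add: F_def mono2_def a_ac)
  qed
  have "F a b c d = F a' b' c' d'"
  proof (rule uniq_repr[OF lf S(1) x, where P = "{(0,0),(1,0),(0,1),(1,1)}"])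
    have c: "a \<in> carrier R" "b \<in> carrier R" "c \<in> carrier R" "d \<in> carrier R"
       "a' \<in> carrier R" "b' \<in> carrier R" "c' \<in> carrier R" "d' \<in> carrier R" using in_S S by auto
    show "finsum R (\<lambda>p. F a b c d p \<otimes> mono2 R x1 x2 p) ?P = finsum R (\<lambda>p. F a' b' c' d' p \<otimes> mono2 R x1 x2 p) ?P"
      unfolding sum[OF c(1-4)] sum[OF c(5-8)] by (rule eq)
  qed (use in_S S in \<open>auto simp: F_def\<close>)
  then have "\<And>p. F a b c d p = F a' b' c' d' p" by simp
  from this[of "(0,0)"] this[of "(1,0)"] this[of "(0,1)"] this[of "(1,1)"]
  show ?thesis by (simp add: F_def)
qed

lemma (in ring) uniq3:
  assumes lf: "left_free_mono_basis R S x1 x2" and S: "S \<subseteq> carrier R" "\<zero> \<in> S"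
    and x: "x1 \<in> carrier R" "x2 \<in> carrier R"
    and in_S: "b \<in> S" "c \<in> S" "a \<in> S" "b' \<in> S" "c' \<in> S" "a' \<in> S"
    and eq: "b \<otimes> x1 \<oplus> c \<otimes> x2 \<oplus> a = b' \<otimes> x1 \<oplus> c' \<otimes> x2 \<oplus> a'"
  shows "b = b' \<and> c = c' \<and> a = a'"
proof -
  have c: "a \<in> carrier R" "b \<in> carrier R" "c \<in> carrier R" "a' \<in> carrier R" "b' \<in> carrier R" "c' \<in> carrier R"
    using in_S S by auto
  have "a \<oplus> b \<otimes> x1 \<oplus> c \<otimes> x2 \<oplus> \<zero> \<otimes> (x1 \<otimes> x2) = a' \<oplus> b' \<otimes> x1 \<oplus> c' \<otimes> x2 \<oplus> \<zero> \<otimes> (x1 \<otimes> x2)"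
    using eq c x by (simp add: a_ac)
  from uniq4[OF lf S x in_S(3,1,2) S(2) in_S(6,4,5) S(2) this] show ?thesis by simp
qed

lemma (in ring) finsum_in_subring:
  assumes H: "subring H R" and I: "finite I"
  shows "f \<in> I \<rightarrow> H \<Longrightarrow> finsum R f I \<in> H"
  using I
proof (induction I rule: finite_induct)
  case empty then show ?case using subringE(2)[OF H] by simp
next
  case (insert x F)
  have Hc: "H \<subseteq> carrier R" using subringE(1)[OF H] .
  have "f \<in> F \<rightarrow> carrier R" "f x \<in> carrier R" using insert.prems Hc by auto
  then have "finsum R f (insert x F) = f x \<oplus> finsum R f F" using insert by (simp add: finsum_insert)
  then show ?case using insert subringE(7)[OF H] by auto
qed

lemma (in ring) pow_in_subring:
  assumes H: "subring H R" and x: "x \<in> H"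
  shows "x [^] (n::nat) \<in> H"
proof (induction n)
  case 0 then show ?case using subringE(3)[OF H] by simp
next
  case (Suc n) then show ?case using subringE(6)[OF H] x by simp
qed

lemma (in ring) minus_split:
  "y \<in> carrier R \<Longrightarrow> z \<in> carrier R \<Longrightarrow> y = (y \<ominus> z) \<oplus> z"
  by (simp add: a_minus_def a_assoc l_neg)

lemma (in ring) doe_vals:
  assumes lf: "left_free_mono_basis R S x1 x2" and S: "S \<subseteq> carrier R" "\<zero> \<in> S"
    and x: "x1 \<in> carrier R" "x2 \<in> carrier R"
    and in_S: "s \<in> S" "t \<in> S" "d \<in> S"
    and eq: "xi \<otimes> r = s \<otimes> x1 \<oplus> t \<otimes> x2 \<oplus> d"
  shows "doe_sigma1 R S x1 x2 xi r = s \<and> doe_sigma2 R S x1 x2 xi r = t \<and> doe_delta R S x1 x2 xi r = d"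
proof -
  have u: "s' = s \<and> t' = t \<and> d' = d"
    if "s' \<in> S" "t' \<in> S" "d' \<in> S" "xi \<otimes> r = s' \<otimes> x1 \<oplus> t' \<otimes> x2 \<oplus> d'" for s' t' d'
    using uniq3[OF lf S x that(1-3) in_S] that(4) eq by simp
  show ?thesis unfolding doe_sigma1_def doe_sigma2_def doe_delta_def
  proof (intro conjI)
    show "(THE s'. s' \<in> S \<and> (\<exists>t\<in>S. \<exists>d\<in>S. xi \<otimes> r = s' \<otimes> x1 \<oplus> t \<otimes> x2 \<oplus> d)) = s"
      by (rule the_equality) (use in_S eq u in blast)+
    show "(THE t'. t' \<in> S \<and> (\<exists>s\<in>S. \<exists>d\<in>S. xi \<otimes> r = s \<otimes> x1 \<oplus> t' \<otimes> x2 \<oplus> d)) = t"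
      by (rule the_equality) (use in_S eq u in blast)+
    show "(THE d'. d' \<in> S \<and> (\<exists>s\<in>S. \<exists>t\<in>S. xi \<otimes> r = s \<otimes> x1 \<oplus> t \<otimes> x2 \<oplus> d')) = d"
      by (rule the_equality) (use in_S eq u in blast)+
  qed
qed

lemma (in ring) pbw_val1:
  assumes lf: "left_free_mono_basis R S x1 x2" and S: "S \<subseteq> carrier R" "\<zero> \<in> S"
    and x: "x1 \<in> carrier R" "x2 \<in> carrier R"
    and c: "c \<in> S" and r: "r \<in> carrier R" and eq: "x1 \<otimes> r = c \<otimes> x1"
  shows "pbw_sigma R S x1 r = c"
  unfolding pbw_sigma_def
proof (rule the_equality)
  have cc: "c \<in> carrier R" using c S by auto
  show "c \<in> S \<and> x1 \<otimes> r \<ominus> c \<otimes> x1 \<in> S" using c S eq cc x by (simp add: a_minus_def r_neg)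
  fix s assume a: "s \<in> S \<and> x1 \<otimes> r \<ominus> s \<otimes> x1 \<in> S"
  define e where "e = x1 \<otimes> r \<ominus> s \<otimes> x1"
  have sc: "s \<in> carrier R" using a S by auto
  have "x1 \<otimes> r = e \<oplus> s \<otimes> x1" unfolding e_def using minus_split sc x r by simp
  then have "c \<otimes> x1 \<oplus> \<zero> \<otimes> x2 \<oplus> \<zero> = s \<otimes> x1 \<oplus> \<zero> \<otimes> x2 \<oplus> e"
    using eq sc cc x a S e_def by (simp add: a_ac)
  from uniq3[OF lf S x c S(2) S(2) _ S(2) _ this] a e_def show "s = c" by simp
qed

lemma (in ring) pbw_val2:
  assumes lf: "left_free_mono_basis R S x1 x2" and S: "S \<subseteq> carrier R" "\<zero> \<in> S"
    and x: "x1 \<in> carrier R" "x2 \<in> carrier R"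
    and c: "c \<in> S" and r: "r \<in> carrier R" and eq: "x2 \<otimes> r = c \<otimes> x2"
  shows "pbw_sigma R S x2 r = c"
  unfolding pbw_sigma_def
proof (rule the_equality)
  have cc: "c \<in> carrier R" using c S by auto
  show "c \<in> S \<and> x2 \<otimes> r \<ominus> c \<otimes> x2 \<in> S" using c S eq cc x by (simp add: a_minus_def r_neg)
  fix s assume a: "s \<in> S \<and> x2 \<otimes> r \<ominus> s \<otimes> x2 \<in> S"
  define e where "e = x2 \<otimes> r \<ominus> s \<otimes> x2"
  have sc: "s \<in> carrier R" using a S by auto
  have "x2 \<otimes> r = e \<oplus> s \<otimes> x2" unfolding e_def using minus_split sc x r by simp
  then have "\<zero> \<otimes> x1 \<oplus> c \<otimes> x2 \<oplus> \<zero> = \<zero> \<otimes> x1 \<oplus> s \<otimes> x2 \<oplus> e"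
    using eq sc cc x a S e_def by (simp add: a_ac)
  from uniq3[OF lf S x S(2) c S(2) S(2) _ _ this] a e_def show "s = c" by simp
qed



lemma (in ring) main:
  assumes A1: "K_algebra_ext R K S" and A2: "graded_alg R K S Rg"
    and A3: "quasi_commutative_PBW2 R S x1 x2" and A4: "graded_skew_PBW2 R K S Rg x1 x2"
    and A5: "connected_ext R K Rg x1 x2"
  shows "\<exists>p12 p11 t0 t1 t2. right_double_ore R K S x1 x2 p12 p11 t0 t1 t2
         \<and> trimmed_doe R S x1 x2 t0 t1 t2 \<and> graded_doe R K S Rg x1 x2 t0 t1 t2
         \<and> connected_ext R K Rg x1 x2"
proof -
  have sub: "subring S R" and KS: "K \<subseteq> S" and subf: "subfield K R"
    using A1 unfolding K_algebra_ext_def by auto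
  have Sc: "S \<subseteq> carrier R" and S0: "\<zero> \<in> S" and S1: "\<one> \<in> S"
    using subringE[OF sub] by auto
  have Smul: "\<And>a b. a \<in> S \<Longrightarrow> b \<in> S \<Longrightarrow> a \<otimes> b \<in> S" using subringE(6)[OF sub] by auto
  have skew: "skew_PBW2 R S x1 x2" using A3 unfolding quasi_commutative_PBW2_def by auto
  have x: "x1 \<in> carrier R" "x2 \<in> carrier R" and lf: "left_free_mono_basis R S x1 x2"
    using skew unfolding skew_PBW2_def by auto
  have RgS: "\<And>n. Rg n \<subseteq> S" and Rg0: "\<And>n. \<zero> \<in> Rg n" using A2 unfolding graded_alg_def by auto
  have q: "\<exists>c\<in>S. xi \<otimes> r = c \<otimes> xi" if xi: "xi \<in> {x1, x2}" and r: "r \<in> S" for xi r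
  proof (cases "r = \<zero>")
    case True then show ?thesis using S0 xi x by (auto intro!: bexI[of _ "\<zero>"])
  next
    case False then show ?thesis using A3 xi r unfolding quasi_commutative_PBW2_def by blast
  qed
  obtain c where c: "c \<in> S" "x2 \<otimes> x1 = c \<otimes> x1 \<otimes> x2"
    using A3 unfolding quasi_commutative_PBW2_def by blast
  obtain c' e where c': "c' \<in> Rg 0" "x2 \<otimes> x1 \<ominus> c' \<otimes> x1 \<otimes> x2 = e"
    and e: "e \<in> sum3 R (Rg 2) (lmul R (Rg 1) x1) (lmul R (Rg 1) x2)"
    using A4 unfolding graded_skew_PBW2_def by blast
  obtain a b d where abd: "a \<in> Rg 2" "b \<in> Rg 1" "d \<in> Rg 1" "e = a \<oplus> b \<otimes> x1 \<oplus> d \<otimes> x2"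
    using e unfolding sum3_def lmul_def by blast
  have abdS: "a \<in> S" "b \<in> S" "d \<in> S" "c' \<in> S" using abd c' RgS by auto
  have cc: "c \<in> carrier R" "c' \<in> carrier R" "a \<in> carrier R" "b \<in> carrier R" "d \<in> carrier R"
    using abdS c Sc by auto
  have "x2 \<otimes> x1 = e \<oplus> c' \<otimes> x1 \<otimes> x2" using minus_split[of "x2 \<otimes> x1" "c' \<otimes> x1 \<otimes> x2"] c' x cc by simp
  then have "\<zero> \<oplus> \<zero> \<otimes> x1 \<oplus> \<zero> \<otimes> x2 \<oplus> c \<otimes> (x1 \<otimes> x2) = a \<oplus> b \<otimes> x1 \<oplus> d \<otimes> x2 \<oplus> c' \<otimes> (x1 \<otimes> x2)"
    using c abd cc x by (simp add: m_assoc)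
  from uniq4[OF lf Sc S0 x S0 S0 S0 c(1) abdS this] have cc': "c = c'" by simp
  have Rg0K: "Rg 0 \<subseteq> K"
  proof
    fix r assume r: "r \<in> Rg 0"
    have rc: "r \<in> carrier R" using r RgS Sc by auto
    have K1: "\<one> \<in> K" using subringE(3)[OF subfieldE(1)[OF subf]] .
    have m0: "mono2 R x1 x2 (0,0) = \<one>" using x by (simp add: mono2_def)
    have "finsum R (\<lambda>i. (\<lambda>_. \<one>) i \<otimes> (\<lambda>_. r \<otimes> mono2 R x1 x2 (0,0)) i) {0::nat} = r"
      using rc by (simp add: m0 finsum_insert)
    moreover have "(\<lambda>_. \<one>) \<in> {0::nat} \<rightarrow> K" using K1 by auto
    moreover have "(\<lambda>_. r \<otimes> mono2 R x1 x2 (0,0)) \<in> {0::nat} \<rightarrow>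
        {r \<otimes> mono2 R x1 x2 (a, b) | r t a b. r \<in> Rg t \<and> t + a + b = 0}" using r by auto
    ultimately have "r \<in> ext_grading R K Rg x1 x2 0"
      unfolding ext_grading_def Kspan_def
      apply -
      apply (rule CollectI)
      apply (rule exI[of _ "{0::nat}"], rule exI[of _ "\<lambda>_. \<one>"], rule exI[of _ "\<lambda>_. r \<otimes> mono2 R x1 x2 (0,0)"])
      apply (intro conjI)
      apply simp_all
      done
    then show "r \<in> K" using A5 unfolding connected_ext_def by simp
  qed
  have cK: "c \<in> K" using cc' c' Rg0K by auto
  have K0: "\<zero> \<in> K" using subringE(2)[OF subfieldE(1)[OF subf]] .
  show ?thesis
  proof (intro exI conjI)
    show "right_double_ore R K S x1 x2 c \<zero> \<zero> \<zero> \<zero>"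
      unfolding right_double_ore_def
    proof (intro conjI)
      show "carrier R = generate_ring R (S \<union> {x1, x2})"
      proof
        have H: "S \<union> {x1, x2} \<subseteq> carrier R" using Sc x by auto
        show "generate_ring R (S \<union> {x1, x2}) \<subseteq> carrier R" by (rule generate_ring_incl[OF H])
        have G: "subring (generate_ring R (S \<union> {x1, x2})) R" by (rule generate_ring_is_subring[OF H])
        show "carrier R \<subseteq> generate_ring R (S \<union> {x1, x2})"
        proof
          fix z assume z: "z \<in> carrier R"
          then obtain f where f: "f \<in> UNIV \<rightarrow> S" "finite {p. f p \<noteq> \<zero>}"
            "z = finsum R (\<lambda>p. f p \<otimes> mono2 R x1 x2 p) {p. f p \<noteq> \<zero>}"
            using lf unfolding left_free_mono_basis_def by blast
          have "f p \<otimes> mono2 R x1 x2 p \<in> generate_ring R (S \<union> {x1, x2})" for p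
          proof -
            have "f p \<in> generate_ring R (S \<union> {x1, x2})" using f(1) by (auto intro: generate_ring.incl)
            moreover have "x1 [^] fst p \<in> generate_ring R (S \<union> {x1, x2})"
              by (rule pow_in_subring[OF G]) (auto intro: generate_ring.incl)
            moreover have "x2 [^] snd p \<in> generate_ring R (S \<union> {x1, x2})"
              by (rule pow_in_subring[OF G]) (auto intro: generate_ring.incl)
            ultimately show ?thesis unfolding mono2_def using subringE(6)[OF G] by auto
          qed
          then show "z \<in> generate_ring R (S \<union> {x1, x2})"
            unfolding f(3) by (intro finsum_in_subring[OF G f(2)]) auto
        qed
      qed
      show "x2 \<otimes> x1 = c \<otimes> x1 \<otimes> x2 \<oplus> \<zero> \<otimes> x1 \<otimes> x1 \<oplus> \<zero> \<otimes> x1 \<oplus> \<zero> \<otimes> x2 \<oplus> \<zero>"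
        using c cc x by simp
      show "\<forall>r\<in>S. \<forall>s\<in>S. x1 \<otimes> r \<oplus> x2 \<otimes> s \<in> sum3 R (lmul R S x1) (lmul R S x2) S"
      proof (intro ballI)
        fix r s assume r: "r \<in> S" and s: "s \<in> S"
        obtain cr where cr: "cr \<in> S" "x1 \<otimes> r = cr \<otimes> x1" using q[of x1 r] r by auto
        obtain cs where cs: "cs \<in> S" "x2 \<otimes> s = cs \<otimes> x2" using q[of x2 s] s by auto
        have "cr \<in> carrier R" "cs \<in> carrier R" using cr cs Sc by auto
        then have "x1 \<otimes> r \<oplus> x2 \<otimes> s = cr \<otimes> x1 \<oplus> cs \<otimes> x2 \<oplus> \<zero>" using cr cs x by simp
        then show "x1 \<otimes> r \<oplus> x2 \<otimes> s \<in> sum3 R (lmul R S x1) (lmul R S x2) S"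
          unfolding sum3_def lmul_def using cr cs S0 by blast
      qed
    qed (use sub x cK K0 lf S0 in auto)
    have dv: "doe_sigma1 R S x1 x2 xi r = (if xi = x1 then pbw_sigma R S xi r else \<zero>)
         \<and> doe_sigma2 R S x1 x2 xi r = (if xi = x1 then \<zero> else pbw_sigma R S xi r)
         \<and> doe_delta R S x1 x2 xi r = \<zero>" if xi: "xi \<in> {x1, x2}" and r: "r \<in> S" for xi r
    proof -
      obtain cr where cr: "cr \<in> S" "xi \<otimes> r = cr \<otimes> xi" using q[OF xi r] by auto
      have crc: "cr \<in> carrier R" "r \<in> carrier R" using cr r Sc by auto
      show ?thesis
      proof (cases "xi = x1")
        case True
        have "xi \<otimes> r = cr \<otimes> x1 \<oplus> \<zero> \<otimes> x2 \<oplus> \<zero>" using cr crc x True by simp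
        from doe_vals[OF lf Sc S0 x cr(1) S0 S0 this] pbw_val1[OF lf Sc S0 x cr(1) crc(2)] cr True
        show ?thesis by simp
      next
        case False
        then have xi2: "xi = x2" using xi by auto
        have "xi \<otimes> r = \<zero> \<otimes> x1 \<oplus> cr \<otimes> x2 \<oplus> \<zero>" using cr crc x xi2 by simp
        from doe_vals[OF lf Sc S0 x S0 cr(1) S0 this] pbw_val2[OF lf Sc S0 x cr(1) crc(2)] cr xi2 False
        show ?thesis by simp
      qed
    qed
    show "trimmed_doe R S x1 x2 \<zero> \<zero> \<zero>" unfolding trimmed_doe_def using dv by auto
    have ps: "\<forall>xi\<in>{x1, x2}. \<forall>m. \<forall>r\<in>Rg m. pbw_sigma R S xi r \<in> Rg m"
      using A4 unfolding graded_skew_PBW2_def by blast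
    show "graded_doe R K S Rg x1 x2 \<zero> \<zero> \<zero>" unfolding graded_doe_def
    proof (intro conjI ballI allI)
      fix xi m r assume xi: "xi \<in> {x1, x2}" and r: "r \<in> Rg m"
      have rS: "r \<in> S" using r RgS by auto
      show "doe_sigma1 R S x1 x2 xi r \<in> Rg m" using dv[OF xi rS] ps xi r Rg0 by auto
      show "doe_sigma2 R S x1 x2 xi r \<in> Rg m" using dv[OF xi rS] ps xi r Rg0 by auto
      show "doe_delta R S x1 x2 xi r \<in> Rg (m + 1)" using dv[OF xi rS] Rg0 by auto
    qed (use A2 Rg0 in auto)
    show "connected_ext R K Rg x1 x2" by (rule A5)
  qed
qed


theorem corollary3p3:
  fixes A :: "('a, 'b) ring_scheme" and K R :: "'a set" and Rg :: "nat \<Rightarrow> 'a set"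
    and x1 x2 :: 'a
  assumes "K_algebra_ext A K R"
    and "graded_alg A K R Rg"
    and "quasi_commutative_PBW2 A R x1 x2"
    and "graded_skew_PBW2 A K R Rg x1 x2"
    and "connected_ext A K Rg x1 x2"
  shows "\<exists>p12 p11 t0 t1 t2.
           right_double_ore A K R x1 x2 p12 p11 t0 t1 t2
         \<and> trimmed_doe A R x1 x2 t0 t1 t2
         \<and> graded_doe A K R Rg x1 x2 t0 t1 t2
         \<and> connected_ext A K Rg x1 x2"
  proof -
  have "ring A" using assms(1) unfolding K_algebra_ext_def by auto
  then show ?thesis using ring.main[OF _ assms] by blast
qed

end
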